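(* Suppose the PL condition, KKT regularity, and projected-gradient injectivity (below) hold for all $t=1,\dots,T$, with noiseless observations. If there exists $\bar{\boldsymbol{\theta}}\in\Theta$ such that $\ell_t(\bar{\boldsymbol{\theta}})=0$ for all $t=1,\dots,T$, then $\boldsymbol{\theta}_t=\bar{\boldsymbol{\theta}}$ for all $t$.
   Context: Setting: for periods $t=1,\dots,T$, data $\mathbf{B}_t\in\mathbb{R}^{k\times n}$, $\mathbf{q}_t\in\mathbb{R}^k_{+}$ define $\mathcal{X}_t=\{\mathbf{x}\in\mathbb{R}^n_+:\mathbf{B}_t\mathbf{x}\le\mathbf{q}_t\}$. $\Theta\subset\mathbb{R}^p$ is a parameter set, $c_t:\mathbb{R}^n\times\Theta\to\mathbb{R}$ is differentiable in $\mathbf{x}$, and allocations $\mathbf{x}_t\in\mathbb{R}^n_+$ are observed. $\mathrm{P}_t:=I-\mathbf{B}_t^\top(\mathbf{B}_t\mathbf{B}_t^\top)^\dagger\mathbf{B}_t$. The inverse loss is $$\ell_t(\boldsymbol{\theta}) := \|(\mathbf{B}_t\mathbf{x}_t-\mathbf{q}_t)_+\|^2+\inf_{\boldsymbol{\lambda}_t\ge 0}\|\nabla_{\mathbf{x}}c_t(\mathbf{x}_t;\boldsymbol{\theta})+\mathbf{B}_t^\top\boldsymbol{\lambda}_t\|^2+|\boldsymbol{\lambda}_t^\top(\mathbf{B}_t\mathbf{x}_t-\mathbf{q}_t)|,$$ with $\boldsymbol{\lambda}_t\ge0$ the multiplier appearing in the dual feasibility term. PL condition: there is $\mu>0$ with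 $\frac{1}{2\mu}\|\nabla_{\mathbf{x}}c_t(\mathbf{x};\boldsymbol{\theta})\|^2\ge c_t(\mathbf{x};\boldsymbol{\theta})-\min_{\mathbf{y}\in\mathcal{X}_t}c_t(\mathbf{y};\boldsymbol{\theta})$ for all $t$, $\boldsymbol{\theta}\in\Theta$, $\mathbf{x}\in\mathbb{R}^n_+$. KKT regularity: for each $t$ there exist a latent parameter $\boldsymbol{\theta}_t\in\Theta$ and $\boldsymbol{\lambda}_t\in\mathbb{R}^k_+$ with $\nabla_{\mathbf{x}}c_t(\mathbf{x}_t;\boldsymbol{\theta}_t)+\mathbf{B}_t^\top\boldsymbol{\lambda}_t=\mathbf{0}$, $\mathbf{B}_t\mathbf{x}_t\le\mathbf{q}_t$, $\boldsymbol{\lambda}_t^\top(\mathbf{B}_t\mathbf{x}_t-\mathbf{q}_t)=0$. Projected-gradient injectivity: for each $t$, $\boldsymbol{\theta}\mapsto\mathrm{P}_t\nabla_{\mathbf{x}}c_t(\mathbf{x}_t;\boldsymbol{\theta})$ is injective on $\Theta$. *)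

theory Defs
  imports "HOL-Analysis.Analysis"
begin

definition nonneg_vec :: "real^'n \<Rightarrow> bool" where
  "nonneg_vec v \<longleftrightarrow> (\<forall>i. 0 \<le> v $ i)"

definition pos_part_vec :: "real^'n \<Rightarrow> real^'n" where
  "pos_part_vec v = (\<chi> i. max (v $ i) 0)"

definition is_pinv :: "real^'m^'n \<Rightarrow> real^'n^'m \<Rightarrow> bool" where
  "is_pinv A X \<longleftrightarrow> A ** X ** A = A \<and> X ** A ** X = X \<and>
     transpose (A ** X) = A ** X \<and> transpose (X ** A) = X ** A"

definition pinv :: "real^'m^'n \<Rightarrow> real^'n^'m" where
  "pinv A = (SOME X. is_pinv A X)"

definition proj_null :: "real^'n^'k \<Rightarrow> real^'n^'n" where
  "proj_null B = mat 1 - transpose B ** pinv (B ** transpose B) ** B"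

definition feas :: "real^'n^'k \<Rightarrow> real^'k \<Rightarrow> (real^'n) set" where
  "feas B q = {x. nonneg_vec x \<and> (\<forall>i. (B *v x) $ i \<le> q $ i)}"

text \<open>Inverse loss, given the x-gradient g = grad_x c_t(x_t; theta).\<close>
definition inv_loss :: "real^'n^'k \<Rightarrow> real^'k \<Rightarrow> real^'n \<Rightarrow> real^'n \<Rightarrow> real" where
  "inv_loss B q x g =
     (norm (pos_part_vec (B *v x - q)))\<^sup>2 +
     Inf ((\<lambda>lam. (norm (g + transpose B *v lam))\<^sup>2 + \<bar>lam \<bullet> (B *v x - q)\<bar>) ` {lam. nonneg_vec lam})"

end

theory Submission
  imports Defs
begin

declare transpose_matrix_vector[simp del]

lemma mv_add: "(A + B) *v x = A *v x + B *v x" for A B :: "real^'n^'m"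
  by (simp add: matrix_vector_mult_def vec_eq_iff sum.distrib algebra_simps)
lemma mv_diff: "(A - B) *v x = A *v x - B *v x" for A B :: "real^'n^'m"
  by (simp add: matrix_vector_mult_def vec_eq_iff sum_subtractf algebra_simps)
lemma mv_radd: "A *v (x + y) = A *v x + A *v y" for A :: "real^'n^'m"
  by (simp add: matrix_vector_mult_def vec_eq_iff sum.distrib algebra_simps)
lemma mv_rdiff: "A *v (x - y) = A *v x - A *v y" for A :: "real^'n^'m"
  by (simp add: matrix_vector_mult_def vec_eq_iff sum_subtractf algebra_simps)
lemma mv_rneg: "A *v (- x) = - (A *v x)" for A :: "real^'n^'m"
  by (simp add: matrix_vector_mult_def vec_eq_iff sum_negf algebra_simps)
lemma inner_transpose: "inner (transpose A *v u) v = inner u (A *v v)" for A :: "real^'n^'m"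
  by (simp add: dot_lmul_matrix transpose_matrix_vector)

lemma pinv_sym_exists:
  fixes M :: "real^'n^'n" assumes sym: "transpose M = M" shows "\<exists>X. is_pinv M X"
proof -
  have symv: "inner (M *v u) v = inner u (M *v v)" for u v
    using inner_transpose[of M u v] sym by simp
  have sub: "subspace (range ((*v) M))"
    by (rule linear_subspace_image) auto
  obtain C where C1: "C \<subseteq> range ((*v) M)" and C2: "pairwise orthogonal C"
     and C3: "\<And>x. x\<in>C \<Longrightarrow> norm x = 1" and C4: "independent C" and C5: "span C = range ((*v) M)"
    using orthonormal_basis_subspace[OF sub] by metis
  have finC: "finite C" using C4 independent_imp_finite by blast
  define Q :: "real^'n^'n" where "Q = (\<chi> i j. \<Sum>b\<in>C. b$i * b$j)"
  have Qv: "Q *v v = (\<Sum>b\<in>C. inner b v *\<^sub>R b)" for v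
    apply (simp add: Q_def matrix_vector_mult_def inner_vec_def vec_eq_iff sum_distrib_left sum_distrib_right sum_component mult_ac)
    apply (subst sum.swap) apply (simp add: mult_ac)
    done
  have Qt: "transpose Q = Q" by (simp add: Q_def transpose_def vec_eq_iff mult.commute)
  have Qsym: "inner (Q *v u) v = inner u (Q *v v)" for u v
    using inner_transpose[of Q u v] Qt by simp
  have Qb: "Q *v b = b" if b: "b \<in> C" for b
  proof -
    have H: "\<forall>b'\<in>C. inner b' b *\<^sub>R b' = (if b' = b then b else 0)"
    proof
      fix b' assume b': "b' \<in> C"
      show "inner b' b *\<^sub>R b' = (if b' = b then b else 0)"
      proof (cases "b' = b")
        case True
        then have "inner b' b = 1" using C3[OF b] by (simp add: dot_square_norm)
        then show ?thesis using True by simp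
      next
        case False
        then have "inner b' b = 0" using C2 b b' unfolding pairwise_def orthogonal_def by blast
        then show ?thesis using False by simp
      qed
    qed
    then have "Q *v b = (\<Sum>b'\<in>C. (if b' = b then b else 0))" using H unfolding Qv by (intro sum.cong) auto
    also have "\<dots> = b" using b finC by (simp add: sum.delta')
    finally show ?thesis .
  qed
  have Qspan: "Q *v x = x" if "x \<in> span C" for x
    using linear_eq_on_span[of "(*v) Q" id C x] Qb that linear_id by auto
  have QM: "Q *v (M *v v) = M *v v" for v using Qspan C5 by auto
  have QQ: "Q *v (Q *v v) = Q *v v" for v
  proof -
    have "Q *v v \<in> span C" unfolding Qv by (intro span_sum span_scale span_base) 
    then show ?thesis using Qspan by blast
  qed
  have Qker: "Q *v v = 0" if Mv: "M *v v = 0" for v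
  proof -
    have "inner b v = 0" if "b \<in> C" for b
    proof -
      obtain u where "b = M *v u" using C1 \<open>b \<in> C\<close> by blast
      then show ?thesis using symv Mv by simp
    qed
    then show ?thesis unfolding Qv by simp
  qed
  have MQ: "M *v (Q *v v) = M *v v" for v
  proof -
    define w where "w = v - Q *v v"
    have Qw: "Q *v w = 0" unfolding w_def by (simp add: mv_rdiff QQ)
    have "inner (M *v w) (M *v w) = inner w (M *v (M *v w))" by (rule symv)
    also have "\<dots> = inner w (Q *v (M *v (M *v w)))" by (simp add: QM)
    also have "\<dots> = inner (Q *v w) (M *v (M *v w))" by (simp add: Qsym)
    also have "\<dots> = 0" using Qw by simp
    finally have "M *v w = 0" by simp
    then show ?thesis unfolding w_def by (simp add: mv_rdiff)
  qed
  define N where "N = M + mat 1 - Q"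
  have Nv: "N *v v = M *v v + v - Q *v v" for v
    by (simp add: N_def mv_add mv_diff)
  have Ninj: "v = 0" if Nz: "N *v v = 0" for v
  proof -
    define w where "w = v - Q *v v"
    have Qw: "Q *v w = 0" unfolding w_def by (simp add: mv_rdiff QQ)
    have Mvw: "M *v v = - w" using Nz Nv unfolding w_def by (simp add: algebra_simps)
    have "inner w (M *v v) = inner w (Q *v (M *v v))" by (simp add: QM)
    also have "\<dots> = inner (Q *v w) (M *v v)" by (simp add: Qsym)
    also have "\<dots> = 0" using Qw by simp
    finally have "inner (M *v v) (M *v v) = 0" using Mvw by simp
    then have Mv0: "M *v v = 0" by simp
    then have "w = 0" using Mvw by simp
    then have "v = Q *v v" unfolding w_def by simp
    then show ?thesis using Qker[OF Mv0] by simp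
  qed
  obtain Ni where Ni1: "Ni ** N = mat 1"
    using Ninj matrix_left_invertible_ker by blast
  then have Ni2: "N ** Ni = mat 1" using matrix_left_right_inverse by blast
  have Niv1: "Ni *v (N *v v) = v" for v using Ni1 by (simp add: matrix_vector_mul_assoc)
  have Niv2: "N *v (Ni *v v) = v" for v using Ni2 by (simp add: matrix_vector_mul_assoc)
  have NQ: "N *v (Q *v v) = M *v v" for v using Nv MQ QQ by simp
  have QN: "Q *v (N *v v) = M *v v" for v using Nv QM QQ by (simp add: mv_radd mv_rdiff)
  have QNi: "Q *v (Ni *v v) = Ni *v (Q *v v)" for v
    by (metis NQ QN Niv1 Niv2)
  define X where "X = Ni ** Q"
  have MX: "M ** X = Q"
    unfolding matrix_eq X_def matrix_vector_mul_assoc[symmetric]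
    by (metis NQ QNi QQ Niv2)
  have XM: "X ** M = Q"
    unfolding matrix_eq X_def matrix_vector_mul_assoc[symmetric]
    by (metis NQ QM Niv1)
  have "M ** X ** M = M"
    using MX by (simp add: matrix_eq matrix_vector_mul_assoc[symmetric] QM)
  moreover have "X ** M ** X = X"
    using XM by (simp add: matrix_eq matrix_vector_mul_assoc[symmetric] X_def QNi QQ)
  ultimately show ?thesis unfolding is_pinv_def using MX XM Qt by metis
qed

lemma pinv_is: fixes M :: "real^'n^'n" assumes "transpose M = M" shows "is_pinv M (pinv M)"
  using pinv_sym_exists[OF assms] unfolding pinv_def by (rule someI_ex)

lemma proj_kills: fixes B :: "real^'n^'k"
  shows "proj_null B *v (transpose B *v l) = 0"
proof -
  define M where "M = B ** transpose B"
  define X where "X = pinv M"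
  have "transpose M = M" unfolding M_def by (simp add: matrix_transpose_mul)
  then have MXM: "M ** X ** M = M" using pinv_is unfolding X_def is_pinv_def by blast
  have Mv: "M *v v = B *v (transpose B *v v)" for v by (simp add: M_def matrix_vector_mul_assoc)
  define D where "D = transpose B *v (X *v (M *v l)) - transpose B *v l"
  have BD: "B *v D = 0"
  proof -
    have "B *v D = M *v (X *v (M *v l)) - M *v l" unfolding D_def by (simp add: mv_rdiff Mv)
    also have "\<dots> = 0" using MXM by (simp add: matrix_vector_mul_assoc matrix_mul_assoc)
    finally show ?thesis .
  qed
  have "D = transpose B *v (X *v (M *v l) - l)" unfolding D_def by (simp add: mv_rdiff)
  then have "inner D D = inner (X *v (M *v l) - l) (B *v D)" by (simp add: inner_transpose)
  then have "D = 0" using BD by simp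
  moreover have "proj_null B *v (transpose B *v l) = - D"
    unfolding proj_null_def D_def X_def M_def
    by (simp add: mv_diff matrix_vector_mul_assoc[symmetric])
  ultimately show ?thesis by simp
qed

theorem proposition1:
  fixes T :: nat
    and B :: "nat \<Rightarrow> real^'n^'k" and q :: "nat \<Rightarrow> real^'k"
    and xobs :: "nat \<Rightarrow> real^'n"
    and \<Theta> :: "(real^'p) set"
    and c :: "nat \<Rightarrow> real^'n \<Rightarrow> real^'p \<Rightarrow> real"
    and gradc :: "nat \<Rightarrow> real^'n \<Rightarrow> real^'p \<Rightarrow> real^'n"
    and \<mu> :: real
    and \<theta> :: "nat \<Rightarrow> real^'p" and lam :: "nat \<Rightarrow> real^'k"
    and \<theta>bar :: "real^'p"
  assumes q_nonneg: "\<forall>t\<in>{1..T}. nonneg_vec (q t)"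
    and x_nonneg: "\<forall>t\<in>{1..T}. nonneg_vec (xobs t)"
    and grad: "\<forall>t\<in>{1..T}. \<forall>th\<in>\<Theta>. \<forall>x. GDERIV (\<lambda>y. c t y th) x :> gradc t x th"
    and PL: "\<mu> > 0 \<and> (\<forall>t\<in>{1..T}. \<forall>th\<in>\<Theta>. \<forall>x. nonneg_vec x \<longrightarrow>
              (1 / (2 * \<mu>)) * (norm (gradc t x th))\<^sup>2
                \<ge> c t x th - Inf ((\<lambda>y. c t y th) ` feas (B t) (q t)))"
    and KKT: "\<forall>t\<in>{1..T}. \<theta> t \<in> \<Theta> \<and> nonneg_vec (lam t) \<and>
              gradc t (xobs t) (\<theta> t) + transpose (B t) *v lam t = 0 \<and>
              (\<forall>i. (B t *v xobs t) $ i \<le> q t $ i) \<and>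
              lam t \<bullet> (B t *v xobs t - q t) = 0"
    and noiseless: "\<forall>t\<in>{1..T}. xobs t \<in> feas (B t) (q t) \<and>
              (\<forall>y\<in>feas (B t) (q t). c t (xobs t) (\<theta> t) \<le> c t y (\<theta> t))"
    and inj: "\<forall>t\<in>{1..T}. inj_on (\<lambda>th. proj_null (B t) *v gradc t (xobs t) th) \<Theta>"
    and bar_in: "\<theta>bar \<in> \<Theta>"
    and zero_loss: "\<forall>t\<in>{1..T}. inv_loss (B t) (q t) (xobs t) (gradc t (xobs t) \<theta>bar) = 0"
  shows "\<forall>t\<in>{1..T}. \<theta> t = \<theta>bar"
proof
  fix t assume t: "t \<in> {1..T}"
  define P where "P = proj_null (B t)"
  define g where "g = gradc t (xobs t) \<theta>bar"
  have K: "\<theta> t \<in> \<Theta>" "gradc t (xobs t) (\<theta> t) + transpose (B t) *v lam t = 0"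
    using KKT t by auto
  have h1: "P *v gradc t (xobs t) (\<theta> t) = 0"
  proof -
    have "gradc t (xobs t) (\<theta> t) = - (transpose (B t) *v lam t)" using K(2)
      by (simp add: eq_neg_iff_add_eq_0)
    then show ?thesis unfolding P_def by (simp add: mv_rneg proj_kills)
  qed
  define S where "S = (\<lambda>l. (norm (g + transpose (B t) *v l))\<^sup>2 + \<bar>l \<bullet> (B t *v xobs t - q t)\<bar>) ` {l. nonneg_vec l}"
  have "nonneg_vec (0::real^'k)" by (simp add: nonneg_vec_def)
  then have Sne: "S \<noteq> {}" unfolding S_def by blast
  have Sbdd: "bdd_below S" unfolding S_def by (intro bdd_belowI[of _ 0]) auto
  have "inv_loss (B t) (q t) (xobs t) g = 0" using zero_loss t g_def by auto
  then have "Inf S = - (norm (pos_part_vec (B t *v xobs t - q t)))\<^sup>2"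
    unfolding inv_loss_def S_def by linarith
  then have InfS: "Inf S \<le> 0" by simp
  have h2: "P *v g = 0"
  proof (rule ccontr)
    assume ne: "P *v g \<noteq> 0"
    obtain Kc where Kc: "Kc > 0" "\<And>x. norm (P *v x) \<le> norm x * Kc"
      using bounded_linear.pos_bounded[OF matrix_vector_mul_bounded_linear[of P]] by blast
    define e where "e = (norm (P *v g) / Kc)\<^sup>2"
    have epos: "e > 0" unfolding e_def using ne Kc by simp
    have "e \<le> s" if "s \<in> S" for s
    proof -
      obtain l where s: "s = (norm (g + transpose (B t) *v l))\<^sup>2 + \<bar>l \<bullet> (B t *v xobs t - q t)\<bar>"
        using \<open>s \<in> S\<close> unfolding S_def by blast
      have "P *v (g + transpose (B t) *v l) = P *v g"
        unfolding P_def by (simp add: mv_radd proj_kills)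
      then have "norm (P *v g) \<le> norm (g + transpose (B t) *v l) * Kc" using Kc(2) by metis
      then have "norm (P *v g) / Kc \<le> norm (g + transpose (B t) *v l)" using Kc(1)
        by (simp add: divide_le_eq)
      then have "e \<le> (norm (g + transpose (B t) *v l))\<^sup>2" unfolding e_def
        using Kc(1) by (intro power_mono) auto
      then show ?thesis using s by simp
    qed
    then have "e \<le> Inf S" using Sne by (intro cInf_greatest) auto
    then show False using InfS epos by simp
  qed
  have "P *v gradc t (xobs t) (\<theta> t) = P *v gradc t (xobs t) \<theta>bar" using h1 h2 g_def by simp
  then show "\<theta> t = \<theta>bar"
    using inj t K(1) bar_in unfolding P_def inj_on_def by blast
qed

end
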